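(* For every positive integer $n$, with $M_m=2(m+1)H_m-4m$ for $m\ge 0$, $$\sum_{j=1}^{n}M_{j-1}M_{n-j}=4\sum_{j=1}^{n}jH_{j-1}(n-j+1)H_{n-j}-\frac{8}{3}n(n^2-1)H_{n+1}+\frac{44n}{9}(n^2-1).$$
   Context: $H_m=\sum_{k=1}^m 1/k$ denotes the $m$th harmonic number, with $H_0=0$. *)

theory Defs
  imports "HOL-Analysis.Analysis"
begin

definition M :: "nat \<Rightarrow> real" where
  "M m = 2 * (real m + 1) * harm m - 4 * real m"

end

theory Submission
  imports Defs
begin

lemma hS: "(harm (Suc n) :: real) = harm n + 1 / (real n + 1)"
  by (simp add: harm_Suc inverse_eq_divide)

lemma lemA: "(\<Sum>j=1..n. real j * (harm (j - 1) :: real)) =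
   real n * (real n + 1) / 2 * harm n - real n * (real n + 3) / 4"
proof (induction n)
  case 0 then show ?case by simp
next
  case (Suc n)
  have "(\<Sum>j=1..Suc n. real j * (harm (j - 1) :: real)) =
     (\<Sum>j=1..n. real j * (harm (j - 1) :: real)) + (real n + 1) * harm n" by simp
  also have "\<dots> = real (Suc n) * (real (Suc n) + 1) / 2 * harm (Suc n) - real (Suc n) * (real (Suc n) + 3) / 4"
    unfolding Suc hS by (simp add: field_simps)
  finally show ?case .
qed

lemma lemB: "(\<Sum>j=1..n. real j * real (n - j) * (harm (j - 1) :: real)) =
   real n * ((real n)^2 - 1) / 6 * harm (n + 1) - 11 * real n * ((real n)^2 - 1) / 36
   + real n * (real n - 1) * (real n - 2) / 6"
proof (induction n)
  case 0 then show ?case by simp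
next
  case (Suc n)
  have "(\<Sum>j=1..Suc n. real j * real (Suc n - j) * (harm (j - 1) :: real)) =
     (\<Sum>j=1..n. real j * real (Suc n - j) * (harm (j - 1) :: real))" by simp
  also have "\<dots> = (\<Sum>j=1..n. real j * real (n - j) * (harm (j - 1) :: real) + real j * harm (j - 1))"
    by (rule sum.cong) (auto simp: Suc_diff_le algebra_simps)
  also have "\<dots> = (\<Sum>j=1..n. real j * real (n - j) * (harm (j - 1) :: real)) + (\<Sum>j=1..n. real j * harm (j - 1))"
    by (simp add: sum.distrib)
  also have "\<dots> = real (Suc n) * ((real (Suc n))^2 - 1) / 6 * harm (Suc n + 1) - 11 * real (Suc n) * ((real (Suc n))^2 - 1) / 36
   + real (Suc n) * (real (Suc n) - 1) * (real (Suc n) - 2) / 6"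
  proof -
    have e1: "harm (n + 1) = harm n + 1 / (real n + 1)" using hS[of n] by simp
    have e2: "harm (Suc n + 1) = harm n + 1 / (real n + 1) + 1 / (real n + 2)"
      using hS[of "Suc n"] hS[of n] by (simp add: add_ac)
    have alg: "x * (x^2 - 1) / 6 * (h + 1 / (x + 1)) - 11 * x * (x^2 - 1) / 36 + x * (x - 1) * (x - 2) / 6
      + (x * (x + 1) / 2 * h - x * (x + 3) / 4)
      = (x + 1) * ((x + 1)^2 - 1) / 6 * (h + 1 / (x + 1) + 1 / (x + 2)) - 11 * (x + 1) * ((x + 1)^2 - 1) / 36
        + (x + 1) * (x + 1 - 1) * (x + 1 - 2) / 6" if "x \<ge> 0" for x h :: real
    proof -
      have a1: "x * (x^2 - 1) / 6 * (1 / (x + 1)) = x * (x - 1) / 6"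
        using that by (simp add: field_simps power2_eq_square)
      have a2: "(x + 1) * ((x + 1)^2 - 1) / 6 * (1 / (x + 1)) = ((x + 1)^2 - 1) / 6"
        using that by (simp add: field_simps)
      have a3: "(x + 1) * ((x + 1)^2 - 1) / 6 * (1 / (x + 2)) = (x + 1) * x / 6"
        using that by (simp add: field_simps power2_eq_square)
      show ?thesis unfolding distrib_left a1 a2 a3
        by (simp add: algebra_simps power2_eq_square power3_eq_cube divide_simps)
    qed
    show ?thesis unfolding Suc lemA e1 e2 using alg[of "real n" "harm n"] by (simp add: ac_simps)

  qed
  finally show ?case .
qed

lemma lemC: "(\<Sum>j=1..n. (real j - 1) * real (n - j)) = real n * (real n - 1) * (real n - 2) / 6"
proof (induction n)
  case 0 then show ?case by simp
next
  case (Suc n)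
  have "(\<Sum>j=1..Suc n. (real j - 1) * real (Suc n - j)) = (\<Sum>j=1..n. (real j - 1) * real (Suc n - j))" by simp
  also have "\<dots> = (\<Sum>j=1..n. (real j - 1) * real (n - j) + (real j - 1))"
    by (rule sum.cong) (auto simp: Suc_diff_le algebra_simps)
  also have "\<dots> = (\<Sum>j=1..n. (real j - 1) * real (n - j)) + (\<Sum>j=1..n. real j) - real n"
    by (simp add: sum.distrib sum_subtractf)
  also have "(\<Sum>j=1..n. real j) = real n * (real n + 1) / 2"
    by (induction n) (simp_all add: field_simps)
  finally show ?case unfolding Suc by (simp add: field_simps)
qed

lemma lemR: "(\<Sum>j=1..n. (real j - 1) * (real (n - j) + 1) * (harm (n - j) :: real)) =
   (\<Sum>j=1..n. real j * real (n - j) * harm (j - 1))"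
proof -
  have "(\<Sum>j=1..n. (real j - 1) * (real (n - j) + 1) * (harm (n - j) :: real)) =
     (\<Sum>j=1..n. (real (n + 1 - j) - 1) * (real (n - (n + 1 - j)) + 1) * (harm (n - (n + 1 - j)) :: real))"
    by (subst sum.atLeastAtMost_rev) simp
  also have "\<dots> = (\<Sum>j=1..n. real j * real (n - j) * harm (j - 1))"
    by (rule sum.cong) (auto simp: of_nat_diff algebra_simps)
  finally show ?thesis .
qed

theorem lemma3p2:
  fixes n :: nat
  assumes "n \<ge> 1"
  shows "(\<Sum>j=1..n. M (j - 1) * M (n - j)) =
    4 * (\<Sum>j=1..n. real j * harm (j - 1) * (real (n - j) + 1) * harm (n - j))
    - 8 / 3 * real n * ((real n)^2 - 1) * harm (n + 1)
    + 44 * real n / 9 * ((real n)^2 - 1)"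
proof -
  have "(\<Sum>j=1..n. M (j - 1) * M (n - j)) =
     (\<Sum>j=1..n. 4 * (real j * harm (j - 1) * (real (n - j) + 1) * harm (n - j))
        - 8 * (real j * real (n - j) * harm (j - 1))
        - 8 * ((real j - 1) * (real (n - j) + 1) * harm (n - j))
        + 16 * ((real j - 1) * real (n - j)))"
    by (rule sum.cong) (auto simp: M_def of_nat_diff algebra_simps)
  also have "\<dots> = 4 * (\<Sum>j=1..n. real j * harm (j - 1) * (real (n - j) + 1) * harm (n - j))
      - 8 * (\<Sum>j=1..n. real j * real (n - j) * harm (j - 1))
      - 8 * (\<Sum>j=1..n. (real j - 1) * (real (n - j) + 1) * harm (n - j))
      + 16 * (\<Sum>j=1..n. (real j - 1) * real (n - j))"
    by (simp add: sum.distrib sum_subtractf sum_distrib_left)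
  also have "\<dots> = 4 * (\<Sum>j=1..n. real j * harm (j - 1) * (real (n - j) + 1) * harm (n - j))
    - 8 / 3 * real n * ((real n)^2 - 1) * harm (n + 1)
    + 44 * real n / 9 * ((real n)^2 - 1)"
    unfolding lemR lemB lemC by (simp add: field_simps)
  finally show ?thesis .
qed

end
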